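(* Let $G=(V,E)$ be a transient, connected, simple, locally finite graph with fixed vertex $o$ and fixed rotor mechanism $(m_x)_{x\in V}$. For any initial rotor configuration $\rho$, any $n\geq1$, and any $t\geq 0$, \[ M_t(\rho,n)=n\,\frac{\mathcal{G}(o)}{\deg(o)}. \]
   Context: For $x\in V$, $\mathcal{E}_x$ is the set of outgoing directed edges $(x,y)$ with $y$ a neighbor of $x$, and $\deg(x)=|\mathcal{E}_x|$. A rotor mechanism is a choice, for each $x$, of a bijection $m_x:\mathcal{E}_x\to\mathcal{E}_x$ with exactly one orbit. A rotor configuration is a map $\rho$ with $\rho(x)\in\mathcal{E}_x$ for each $x$. $\mathcal{G}(x)$ is the expected number of visits to $x$ by simple random walk on $G$ started at $o$. Weight of a directed edge $(x,y)$: writing $(x,y_i):=m_x^i(x,y)$, \[ w(x,y):=\frac{-1}{\deg(x)}\sum_{i=0}^{\deg(x)-1} i\,\frac{\mathcal{G}(y_{i+1})}{\deg(y_{i+1})}. \] Experiment: given $\rho$ and $n\ge1$, define $X_t^{(0)},\dots,X_t^{(n-1)}$ and $\rho_t$ ($t\ge0$) by: $X_0^{(i)}=o$ for all $i$, $\rho_0=\rho$. Let $i_t:=t+1\bmod n$. Particle $i$ has returned to $o$ by time $t$ if $X_t^{(i)}=o$ and $X_s^{(i)}\ne o$ for some $s<t$. If particle $i_t$ has returned to $o$ by time $t$, then $\rho_{t+1}=\rho_t$ and all positions stay the same. Otherwise $\rho_{t+1}(x)=m_x(\rho_t(x))$ for $x=X_t^{(i_t)}$ and $\rho_{t+1}(x)=\rho_t(x)$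 otherwise; $X_{t+1}^{(i_t)}$ is the target vertex of $\rho_{t+1}(X_t^{(i_t)})$ and $X_{t+1}^{(i)}=X_t^{(i)}$ for $i\ne i_t$. Range: $R_t:=\{X_s^{(i)}: i\in\{0,\dots,n-1\},\ s\le t\}$. Define \[ M_t(\rho,n):=\sum_{i=0}^{n-1}\frac{\mathcal{G}(X_t^{(i)})}{\deg(X_t^{(i)})}+\frac{\min\{t,n\}}{\deg(o)}+\sum_{x\in R_t}\bigl(w(\rho_t(x))-w(\rho(x))\bigr). \] *)

theory Defs
  imports Complex_Main
begin

definition nbrs :: "('v \<Rightarrow> 'v \<Rightarrow> bool) \<Rightarrow> 'v \<Rightarrow> 'v set" where
  "nbrs E x = {y. E x y}"

definition out_edges :: "('v \<Rightarrow> 'v \<Rightarrow> bool) \<Rightarrow> 'v \<Rightarrow> ('v \<times> 'v) set" where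
  "out_edges E x = {(x, y) | y. E x y}"

definition deg :: "('v \<Rightarrow> 'v \<Rightarrow> bool) \<Rightarrow> 'v \<Rightarrow> nat" where
  "deg E x = card (out_edges E x)"

definition simple_graph :: "('v \<Rightarrow> 'v \<Rightarrow> bool) \<Rightarrow> bool" where
  "simple_graph E \<longleftrightarrow> (\<forall>x y. E x y \<longrightarrow> E y x) \<and> (\<forall>x. \<not> E x x)"

definition locally_finite :: "('v \<Rightarrow> 'v \<Rightarrow> bool) \<Rightarrow> bool" where
  "locally_finite E \<longleftrightarrow> (\<forall>x. finite (nbrs E x))"

definition connected_graph :: "('v \<Rightarrow> 'v \<Rightarrow> bool) \<Rightarrow> bool" where
  "connected_graph E \<longleftrightarrow> (\<forall>x y. E\<^sup>*\<^sup>* x y)"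

text \<open>n-step transition probabilities of simple random walk started at r0:
  srw_prob E r0 k y = P(X_k = y).\<close>

primrec srw_prob :: "('v \<Rightarrow> 'v \<Rightarrow> bool) \<Rightarrow> 'v \<Rightarrow> nat \<Rightarrow> 'v \<Rightarrow> real" where
  "srw_prob E r0 0 y = (if y = r0 then 1 else 0)"
| "srw_prob E r0 (Suc k) y = (\<Sum>x\<in>nbrs E y. srw_prob E r0 k x / real (deg E x))"

definition green :: "('v \<Rightarrow> 'v \<Rightarrow> bool) \<Rightarrow> 'v \<Rightarrow> 'v \<Rightarrow> real" where
  "green E r0 y = (\<Sum>k. srw_prob E r0 k y)"

definition transient :: "('v \<Rightarrow> 'v \<Rightarrow> bool) \<Rightarrow> 'v \<Rightarrow> bool" where
  "transient E r0 \<longleftrightarrow> summable (\<lambda>k. srw_prob E r0 k r0)"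

definition rotor_mechanism :: "('v \<Rightarrow> 'v \<Rightarrow> bool) \<Rightarrow> ('v \<times> 'v \<Rightarrow> 'v \<times> 'v) \<Rightarrow> bool" where
  "rotor_mechanism E m \<longleftrightarrow>
     (\<forall>x. bij_betw m (out_edges E x) (out_edges E x) \<and>
          (\<forall>e\<in>out_edges E x. \<forall>e'\<in>out_edges E x. \<exists>k. (m ^^ k) e = e'))"

definition rotor_config :: "('v \<Rightarrow> 'v \<Rightarrow> bool) \<Rightarrow> ('v \<Rightarrow> 'v \<times> 'v) \<Rightarrow> bool" where
  "rotor_config E \<rho> \<longleftrightarrow> (\<forall>x. \<rho> x \<in> out_edges E x)"

definition weight :: "('v \<Rightarrow> 'v \<Rightarrow> bool) \<Rightarrow> 'v \<Rightarrow> ('v \<times> 'v \<Rightarrow> 'v \<times> 'v) \<Rightarrow> 'v \<times> 'v \<Rightarrow> real" where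
  "weight E r0 m e =
     (-1 / real (deg E (fst e))) *
     (\<Sum>i<deg E (fst e). real i * green E r0 (snd ((m ^^ (i + 1)) e))
                                  / real (deg E (snd ((m ^^ (i + 1)) e))))"

text \<open>The experiment. A state is (positions of particles 0..n-1, rotor configuration).
  exp_hist E m r0 \<rho> n t is the list of states at times 0..t.\<close>

type_synonym 'v rstate = "(nat \<Rightarrow> 'v) \<times> ('v \<Rightarrow> 'v \<times> 'v)"

definition exp_step :: "('v \<times> 'v \<Rightarrow> 'v \<times> 'v) \<Rightarrow> 'v \<Rightarrow> nat \<Rightarrow> 'v rstate list \<Rightarrow> nat \<Rightarrow> 'v rstate" where
  "exp_step m r0 n h t =
     (let (X, r) = h ! t; i = (t + 1) mod n in
      if X i = r0 \<and> (\<exists>s<t. fst (h ! s) i \<noteq> r0) then (X, r)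
      else (let x = X i; r' = r(x := m (r x)) in (X(i := snd (r' x)), r')))"

primrec exp_hist :: "('v \<times> 'v \<Rightarrow> 'v \<times> 'v) \<Rightarrow> 'v \<Rightarrow> ('v \<Rightarrow> 'v \<times> 'v) \<Rightarrow> nat \<Rightarrow> nat \<Rightarrow> 'v rstate list" where
  "exp_hist m r0 \<rho> n 0 = [(\<lambda>_. r0, \<rho>)]"
| "exp_hist m r0 \<rho> n (Suc t) = exp_hist m r0 \<rho> n t @ [exp_step m r0 n (exp_hist m r0 \<rho> n t) t]"

definition pos :: "('v \<times> 'v \<Rightarrow> 'v \<times> 'v) \<Rightarrow> 'v \<Rightarrow> ('v \<Rightarrow> 'v \<times> 'v) \<Rightarrow> nat \<Rightarrow> nat \<Rightarrow> nat \<Rightarrow> 'v" where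
  "pos m r0 \<rho> n t i = fst (exp_hist m r0 \<rho> n t ! t) i"

definition rot :: "('v \<times> 'v \<Rightarrow> 'v \<times> 'v) \<Rightarrow> 'v \<Rightarrow> ('v \<Rightarrow> 'v \<times> 'v) \<Rightarrow> nat \<Rightarrow> nat \<Rightarrow> 'v \<Rightarrow> 'v \<times> 'v" where
  "rot m r0 \<rho> n t = snd (exp_hist m r0 \<rho> n t ! t)"

definition range_set :: "('v \<times> 'v \<Rightarrow> 'v \<times> 'v) \<Rightarrow> 'v \<Rightarrow> ('v \<Rightarrow> 'v \<times> 'v) \<Rightarrow> nat \<Rightarrow> nat \<Rightarrow> 'v set" where
  "range_set m r0 \<rho> n t = {pos m r0 \<rho> n s i | i s. i < n \<and> s \<le> t}"

definition M_val :: "('v \<Rightarrow> 'v \<Rightarrow> bool) \<Rightarrow> ('v \<times> 'v \<Rightarrow> 'v \<times> 'v) \<Rightarrow> 'v \<Rightarrow> ('v \<Rightarrow> 'v \<times> 'v) \<Rightarrow> nat \<Rightarrow> nat \<Rightarrow> real" where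
  "M_val E m r0 \<rho> n t =
     (\<Sum>i<n. green E r0 (pos m r0 \<rho> n t i) / real (deg E (pos m r0 \<rho> n t i)))
     + real (min t n) / real (deg E r0)
     + (\<Sum>x\<in>range_set m r0 \<rho> n t. weight E r0 m (rot m r0 \<rho> n t x) - weight E r0 m (\<rho> x))"

end

theory Submission
  imports Defs
begin

lemma srw_nonneg: "0 \<le> srw_prob E r0 k y"
  by (induction k arbitrary: y) (auto intro!: sum_nonneg divide_nonneg_nonneg)

lemma sum_upd_gen:
  assumes "finite A" "a \<in> A"
  shows "(\<Sum>z\<in>A. g z ((f(a:=v)) z)) = (\<Sum>z\<in>A. g z (f z)) - g a (f a) + (g a v :: real)"
proof -
  have "(\<Sum>z\<in>A. g z ((f(a:=v)) z)) = g a v + (\<Sum>z\<in>A-{a}. g z ((f(a:=v)) z))"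
    using assms by (simp add: sum.remove)
  also have "(\<Sum>z\<in>A-{a}. g z ((f(a:=v)) z)) = (\<Sum>z\<in>A-{a}. g z (f z))"
    by (rule sum.cong) auto
  also have "(\<Sum>z\<in>A. g z (f z)) = g a (f a) + (\<Sum>z\<in>A-{a}. g z (f z))"
    using assms by (simp add: sum.remove)
  ultimately show ?thesis by simp
qed

lemma shift_id1: "(\<Sum>i<d. real i * g (i+2)) + (\<Sum>i<d. g (i+2)) = (\<Sum>i<d. real i * g (i+1)) + real d * (g (d+1) :: real)"
  by (induction d) (auto simp: algebra_simps)

lemma shift_id2: "(\<Sum>i<d. g (Suc i)) = (\<Sum>i<d. g i) + g d - (g 0 :: real)"
proof -
  have "(\<Sum>i<Suc d. g i) = g 0 + (\<Sum>i<d. g (Suc i))" by (rule sum.lessThan_Suc_shift)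
  moreover have "(\<Sum>i<Suc d. g i) = (\<Sum>i<d. g i) + g d" by simp
  ultimately show ?thesis by simp
qed

locale rsetup =
  fixes E :: "'v \<Rightarrow> 'v \<Rightarrow> bool" and r0 :: 'v
    and m :: "'v \<times> 'v \<Rightarrow> 'v \<times> 'v" and \<rho> :: "'v \<Rightarrow> 'v \<times> 'v" and n :: nat
  assumes simple: "simple_graph E" and lf: "locally_finite E" and conn: "connected_graph E"
    and trans: "transient E r0"
    and rm: "rotor_mechanism E m"
    and rc: "rotor_config E \<rho>"
    and n1: "n \<ge> 1"
begin

lemma symE: "E x y \<Longrightarrow> E y x" using simple unfolding simple_graph_def by blast
lemma irreflE: "\<not> E x x" using simple unfolding simple_graph_def by blast
lemma fin_nbrs: "finite (nbrs E x)" using lf unfolding locally_finite_def by blast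
lemma out_eq: "out_edges E x = (\<lambda>y. (x,y)) ` nbrs E x" unfolding out_edges_def nbrs_def by auto
lemma fin_out: "finite (out_edges E x)" using fin_nbrs out_eq by simp
lemma deg_nbrs: "deg E x = card (nbrs E x)" unfolding deg_def out_eq by (simp add: card_image inj_on_def)
lemma rho_in: "\<rho> x \<in> out_edges E x" using rc unfolding rotor_config_def by blast
lemma deg_pos: "deg E x > 0" unfolding deg_def using rho_in fin_out card_gt_0_iff by blast
lemma m_bij: "bij_betw m (out_edges E x) (out_edges E x)" using rm unfolding rotor_mechanism_def by blast
lemma m_in: "e \<in> out_edges E x \<Longrightarrow> m e \<in> out_edges E x" using m_bij bij_betwE by blast
lemma m_inj: "inj_on m (out_edges E x)" using m_bij bij_betw_def by blast
lemma orbit: "e \<in> out_edges E x \<Longrightarrow> e' \<in> out_edges E x \<Longrightarrow> \<exists>k. (m^^k) e = e'"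
  using rm unfolding rotor_mechanism_def by blast
lemma out_fst: "e \<in> out_edges E x \<Longrightarrow> fst e = x" unfolding out_edges_def by auto
lemma out_E: "e \<in> out_edges E x \<Longrightarrow> E x (snd e)" unfolding out_edges_def by auto

lemma funpow_in: "e \<in> out_edges E x \<Longrightarrow> (m^^k) e \<in> out_edges E x"
  by (induction k) (auto intro: m_in)

lemma funpow_inj: "u \<in> out_edges E x \<Longrightarrow> v \<in> out_edges E x \<Longrightarrow> (m^^a) u = (m^^a) v \<Longrightarrow> u = v"
proof (induction a arbitrary: u v)
  case 0 then show ?case by simp
next
  case (Suc a)
  have "(m^^a) (m u) = (m^^a) (m v)" using Suc.prems(3) by (metis funpow_Suc_right comp_apply)
  then have "m u = m v" using Suc.IH m_in Suc.prems by blast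
  then show ?case using m_inj Suc.prems inj_on_def by metis
qed

lemma period:
  assumes e: "e \<in> out_edges E x"
  shows "(m^^(deg E x)) e = e" and "bij_betw (\<lambda>k. (m^^k) e) {..<deg E x} (out_edges E x)"
proof -
  define d where "d = deg E x"
  define F where "F = (\<lambda>k. (m^^k) e)"
  have Fin: "F k \<in> out_edges E x" for k unfolding F_def using funpow_in e by blast
  have cardA: "card (out_edges E x) = d" unfolding d_def deg_def ..
  have "\<not> inj_on F {..d}"
  proof
    assume "inj_on F {..d}"
    then have "card (F ` {..d}) = Suc d" by (simp add: card_image)
    moreover have "F ` {..d} \<subseteq> out_edges E x" using Fin by auto
    ultimately have "Suc d \<le> d" using card_mono[OF fin_out] cardA by metis
    then show False by simp
  qed
  then obtain a b where ab: "a < b" "b \<le> d" "F a = F b"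
    unfolding inj_on_def by (metis atMost_iff linorder_neqE_nat)
  define p where "p = b - a"
  have p0: "0 < p" "p \<le> d" using ab unfolding p_def by auto
  have Fp: "F p = e"
  proof -
    have "(m^^a) (F p) = F b" unfolding F_def p_def
      using ab by (metis funpow_add comp_apply le_add_diff_inverse less_imp_le)
    also have "\<dots> = (m^^a) e" using ab unfolding F_def by simp
    finally show ?thesis using funpow_inj[OF Fin e] by blast
  qed
  have Fq: "(m^^(p*q)) e = e" for q
  proof (induction q)
    case 0 then show ?case by simp
  next
    case (Suc q)
    have "(m^^(p*Suc q)) e = (m^^p) ((m^^(p*q)) e)" by (simp add: funpow_add)
    then show ?case using Suc Fp unfolding F_def by simp
  qed
  have Fmod: "F k = F (k mod p)" for k
  proof -
    have "F k = (m^^(k mod p + p*(k div p))) e" unfolding F_def by simp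
    also have "\<dots> = (m^^(k mod p)) ((m^^(p*(k div p))) e)" by (simp only: funpow_add comp_apply)
    finally show ?thesis using Fq unfolding F_def by simp
  qed
  have sub: "out_edges E x \<subseteq> F ` {..<p}"
  proof
    fix e' assume "e' \<in> out_edges E x"
    then obtain k where "F k = e'" using orbit e unfolding F_def by blast
    then show "e' \<in> F ` {..<p}" using Fmod p0 by (metis lessThan_iff image_eqI mod_less_divisor)
  qed
  have "d \<le> card (F ` {..<p})" using cardA card_mono[OF _ sub] by simp
  also have "\<dots> \<le> p" using card_image_le[of "{..<p}" F] by simp
  finally have pd: "p = d" using p0 by simp
  then show "(m^^(deg E x)) e = e" using Fp unfolding F_def d_def by simp
  have img: "F ` {..<d} = out_edges E x" using sub Fin pd by auto
  then have "inj_on F {..<d}" using cardA by (simp add: inj_on_iff_eq_card)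
  then show "bij_betw (\<lambda>k. (m^^k) e) {..<deg E x} (out_edges E x)"
    using img unfolding bij_betw_def F_def d_def by simp
qed

definition hh where "hh y = green E r0 y / real (deg E y)"

lemma weight_step:
  assumes e: "e \<in> out_edges E x"
  shows "weight E r0 m (m e) - weight E r0 m e
       = (\<Sum>y\<in>nbrs E x. hh y) / real (deg E x) - hh (snd (m e))"
proof -
  define d where "d = deg E x"
  define g where "g = (\<lambda>k. hh (snd ((m^^k) e)))"
  have d0: "real d > 0" using deg_pos d_def by simp
  have fe: "fst e = x" using out_fst e .
  have fme: "fst (m e) = x" using out_fst m_in e .
  have w1: "weight E r0 m e = -1 / real d * (\<Sum>i<d. real i * g (i+1))"
    unfolding weight_def fe d_def g_def hh_def by (simp add: times_divide_eq_right)
  have w2: "weight E r0 m (m e) = -1 / real d * (\<Sum>i<d. real i * g (i+2))"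
  proof -
    have "(m^^(i+1)) (m e) = (m^^(i+2)) e" for i
      by (metis add_2_eq_Suc' funpow_Suc_right comp_apply add.commute plus_1_eq_Suc)
    then show ?thesis
      unfolding weight_def fme d_def g_def hh_def by (simp add: times_divide_eq_right)
  qed
  have gd: "g d = g 0" unfolding g_def d_def using period(1)[OF e] by simp
  have md1: "(m^^(d+1)) e = m e" using period(1)[OF e] unfolding d_def by simp
  have gd1: "g (d+1) = g 1" unfolding g_def using md1 by simp
  have S1: "(\<Sum>i<d. g (i+1)) = (\<Sum>i<d. g i)" using shift_id2[of g d] gd by simp
  have S2: "(\<Sum>i<d. g i) = (\<Sum>e'\<in>out_edges E x. hh (snd e'))"
    unfolding g_def d_def using sum.reindex_bij_betw[OF period(2)[OF e], of "\<lambda>e'. hh (snd e')"] by simp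
  have S3: "(\<Sum>e'\<in>out_edges E x. hh (snd e')) = (\<Sum>y\<in>nbrs E x. hh y)"
    unfolding out_eq by (simp add: sum.reindex inj_on_def)
  have S4: "(\<Sum>i<d. g (i+2)) = (\<Sum>i<d. g (i+1))" using shift_id2[of "\<lambda>k. g (k+1)" d] gd1 by simp
  have "weight E r0 m (m e) - weight E r0 m e
      = -1 / real d * ((\<Sum>i<d. real i * g (i+2)) - (\<Sum>i<d. real i * g (i+1)))"
    unfolding w1 w2 by (simp add: algebra_simps)
  also have "(\<Sum>i<d. real i * g (i+2)) - (\<Sum>i<d. real i * g (i+1)) = real d * g 1 - (\<Sum>i<d. g (i+1))"
    using shift_id1[where d=d and g=g] gd1 S4 by simp
  finally have "weight E r0 m (m e) - weight E r0 m e = (\<Sum>i<d. g (i+1)) / real d - g 1"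
    using d0 by (simp add: field_simps)
  then show ?thesis using S1 S2 S3 unfolding d_def g_def by simp
qed

lemma reach: "E\<^sup>*\<^sup>* a b \<Longrightarrow> \<exists>c>0. \<exists>j. \<forall>k. c * srw_prob E r0 k a \<le> srw_prob E r0 (k + j) b"
proof (induction rule: rtranclp_induct)
  case base
  have "(1::real) > 0 \<and> (\<forall>k. 1 * srw_prob E r0 k a \<le> srw_prob E r0 (k + 0) a)" by simp
  then show ?case by blast
next
  case (step b b')
  then obtain c j where c: "c > 0" "\<And>k. c * srw_prob E r0 k a \<le> srw_prob E r0 (k+j) b" by blast
  have db: "real (deg E b) > 0" using deg_pos by simp
  have inb: "b \<in> nbrs E b'" using step(2) symE unfolding nbrs_def by blast
  have le: "srw_prob E r0 k b / real (deg E b) \<le> srw_prob E r0 (Suc k) b'" for k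
    using member_le_sum[OF inb, of "\<lambda>x. srw_prob E r0 k x / real (deg E x)"] fin_nbrs
    by (simp add: srw_nonneg)
  show ?case
  proof (intro exI[of _ "c / real (deg E b)"] exI[of _ "Suc j"] conjI allI)
    show "0 < c / real (deg E b)" using c db by simp
    fix k
    have "c / real (deg E b) * srw_prob E r0 k a = (c * srw_prob E r0 k a) / real (deg E b)" by simp
    also have "\<dots> \<le> srw_prob E r0 (k+j) b / real (deg E b)" using c(2) db by (simp add: divide_right_mono)
    also have "\<dots> \<le> srw_prob E r0 (k + Suc j) b'" using le[of "k+j"] by simp
    finally show "c / real (deg E b) * srw_prob E r0 k a \<le> srw_prob E r0 (k + Suc j) b'" .
  qed
qed

lemma summ: "summable (\<lambda>k. srw_prob E r0 k y)"
proof -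
  have "E\<^sup>*\<^sup>* y r0" using conn unfolding connected_graph_def by blast
  then obtain c j where c: "c > 0" "\<And>k. c * srw_prob E r0 k y \<le> srw_prob E r0 (k+j) r0"
    using reach by blast
  have "summable (\<lambda>k. srw_prob E r0 (k+j) r0)"
    using trans summable_iff_shift[of "\<lambda>k. srw_prob E r0 k r0" j] unfolding transient_def by simp
  then have s: "summable (\<lambda>k. srw_prob E r0 (k+j) r0 / c)"
    by (rule summable_divide)
  show ?thesis
  proof (rule summable_comparison_test'[OF s])
    fix k
    show "norm (srw_prob E r0 k y) \<le> srw_prob E r0 (k+j) r0 / c"
      using c(1) c(2)[of k] srw_nonneg[of E r0 k y] by (simp add: field_simps add.commute)
  qed
qed

lemma green_eq: "green E r0 y = (if y = r0 then 1 else 0) + (\<Sum>x\<in>nbrs E y. hh x)"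
proof -
  have "green E r0 y = srw_prob E r0 0 y + (\<Sum>k. srw_prob E r0 (Suc k) y)"
    unfolding green_def using suminf_split_head[OF summ] by simp
  also have "(\<Sum>k. srw_prob E r0 (Suc k) y) = (\<Sum>x\<in>nbrs E y. \<Sum>k. srw_prob E r0 k x / real (deg E x))"
    by (simp add: suminf_sum summable_divide summ)
  also have "\<dots> = (\<Sum>x\<in>nbrs E y. hh x)"
    unfolding hh_def green_def by (simp add: suminf_divide summ)
  finally show ?thesis by simp
qed


abbreviation "P \<equiv> pos m r0 \<rho> n"
abbreviation "R \<equiv> rot m r0 \<rho> n"
abbreviation "H \<equiv> exp_hist m r0 \<rho> n"
abbreviation "Rg \<equiv> range_set m r0 \<rho> n"

lemma len_hist: "length (H t) = Suc t" by (induction t) auto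

lemma hist_nth: "s \<le> t \<Longrightarrow> H t ! s = H s ! s"
proof (induction t)
  case 0 then show ?case by simp
next
  case (Suc t)
  show ?case
  proof (cases "s = Suc t")
    case True then show ?thesis by simp
  next
    case False
    then have st: "s \<le> t" using Suc.prems by simp
    then have "H (Suc t) ! s = H t ! s" by (simp add: nth_append len_hist)
    also have "\<dots> = H s ! s" using Suc.IH[OF st] .
    finally show ?thesis .
  qed
qed

definition frozen where
  "frozen t \<longleftrightarrow> P t (Suc t mod n) = r0 \<and> (\<exists>s<t. P s (Suc t mod n) \<noteq> r0)"

lemma step_gen:
  "P (Suc t) = (if frozen t then P t else (P t)(Suc t mod n := snd (m (R t (P t (Suc t mod n)))))) \<and>
   R (Suc t) = (if frozen t then R t else (R t)(P t (Suc t mod n) := m (R t (P t (Suc t mod n)))))"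
proof -
  have hs: "\<And>s. s < t \<Longrightarrow> H t ! s = H s ! s" using hist_nth less_imp_le by blast
  have ex: "(\<exists>s<t. fst (H t ! s) i \<noteq> r0) = (\<exists>s<t. fst (H s ! s) i \<noteq> r0)" for i
    using hs by auto
  have st: "H (Suc t) ! Suc t = exp_step m r0 n (H t) t" by (simp add: nth_append len_hist)
  obtain X r where Xr: "H t ! t = (X, r)" by (cases "H t ! t")
  define i where "i = Suc t mod n"
  have PX: "P t = X" by (rule ext) (simp add: pos_def Xr)
  have RX: "R t = r" by (simp add: rot_def Xr)
  have PS: "P (Suc t) = fst (H (Suc t) ! Suc t)" by (rule ext) (simp add: pos_def)
  have RS: "R (Suc t) = snd (H (Suc t) ! Suc t)" by (simp add: rot_def)
  have fr: "frozen t = (X i = r0 \<and> (\<exists>s<t. fst (H t ! s) i \<noteq> r0))"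
    unfolding frozen_def PX ex i_def[symmetric] by (simp add: pos_def)
  have S: "H (Suc t) ! Suc t = (if frozen t then (X, r) else (X(i := snd (m (r (X i)))), r(X i := m (r (X i)))))"
    unfolding st exp_step_def Xr fr i_def by (auto simp: Let_def)
  show ?thesis unfolding PS RS S PX RX i_def[symmetric] by simp
qed

lemma step_frozen: "frozen t \<Longrightarrow> P (Suc t) = P t \<and> R (Suc t) = R t"
  using step_gen by simp

lemma step_move: "\<not> frozen t \<Longrightarrow> P (Suc t) = (P t)(Suc t mod n := snd (m (R t (P t (Suc t mod n))))) \<and>
   R (Suc t) = (R t)(P t (Suc t mod n) := m (R t (P t (Suc t mod n))))"
  using step_gen[of t] by simp

lemma P0: "P 0 = (\<lambda>_. r0)" "R 0 = \<rho>" by (auto simp: pos_def rot_def)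

lemma other: "j \<noteq> Suc t mod n \<Longrightarrow> P (Suc t) j = P t j"
  using step_gen[of t] by (cases "frozen t") auto

lemma R_valid: "R t x \<in> out_edges E x"
proof (induction t arbitrary: x)
  case 0 then show ?case using P0 rho_in by simp
next
  case (Suc t)
  show ?case using step_gen[of t] Suc m_in by (cases "frozen t") auto
qed

lemma notmoved: "(\<forall>k<s. Suc k mod n \<noteq> i) \<Longrightarrow> P s i = r0"
proof (induction s)
  case 0 then show ?case using P0 by simp
next
  case (Suc s)
  then have "P (Suc s) i = P s i" using other[of i s] by auto
  then show ?case using Suc by auto
qed

lemma sched: "(\<exists>k<t. Suc k mod n = i) \<Longrightarrow> \<exists>s\<le>t. P s i \<noteq> r0"
proof (induction t)
  case 0 then show ?case by simp
next
  case (Suc t)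
  show ?case
  proof (cases "\<exists>k<t. Suc k mod n = i")
    case True then show ?thesis using Suc.IH le_SucI by blast
  next
    case False
    then have i: "i = Suc t mod n" using Suc.prems less_Suc_eq by auto
    have all: "P s i = r0" if "s \<le> t" for s using notmoved False that by auto
    then have nf: "\<not> frozen t" unfolding frozen_def using i by auto
    have "P (Suc t) i = snd (m (R t r0))" using step_move[OF nf] i all[of t] by simp
    moreover have "E r0 (snd (m (R t r0)))" using out_E m_in R_valid by blast
    ultimately have "P (Suc t) i \<noteq> r0" using irreflE by metis
    then show ?thesis by blast
  qed
qed

lemma sched_iff: "(\<exists>k<t. Suc k mod n = Suc t mod n) \<longleftrightarrow> n \<le> t"
proof
  assume "\<exists>k<t. Suc k mod n = Suc t mod n"
  then obtain k where k: "k < t" "Suc k mod n = Suc t mod n" by blast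
  show "n \<le> t"
  proof (rule ccontr)
    assume "\<not> n \<le> t"
    then have "Suc k < n" using k by simp
    then have "Suc k mod n = Suc k" by simp
    moreover have "Suc t mod n = Suc t \<or> Suc t mod n = 0"
      using \<open>\<not> n \<le> t\<close> by (cases "Suc t = n") auto
    ultimately show False using k by auto
  qed
next
  assume "n \<le> t"
  then have "Suc t = Suc (t - n) + n" by simp
  then have "Suc (t - n) mod n = Suc t mod n" by (metis mod_add_self2)
  moreover have "t - n < t" using \<open>n \<le> t\<close> n1 by simp
  ultimately show "\<exists>k<t. Suc k mod n = Suc t mod n" by blast
qed

lemma range_alt: "Rg t = (\<lambda>(i,s). P s i) ` ({..<n} \<times> {..t})"
  unfolding range_set_def by force

lemma range_fin: "finite (Rg t)" unfolding range_alt by simp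

lemma in_range: "i < n \<Longrightarrow> s \<le> t \<Longrightarrow> P s i \<in> Rg t"
  unfolding range_set_def by blast

lemma range_Suc: "Rg (Suc t) = Rg t \<union> P (Suc t) ` {..<n}"
  unfolding range_set_def by (auto simp: le_Suc_eq)

lemma i_less: "Suc t mod n < n" using n1 by simp

lemma R_out: "x \<notin> Rg t \<Longrightarrow> R t x = \<rho> x"
proof (induction t)
  case 0 then show ?case using P0 by simp
next
  case (Suc t)
  have "x \<notin> Rg t" using Suc.prems range_Suc by blast
  moreover have "x \<noteq> P t (Suc t mod n)" using in_range[OF i_less, of t t] calculation by auto
  ultimately show ?case using Suc.IH step_gen[of t] by (cases "frozen t") auto
qed

abbreviation "Mv t \<equiv> M_val E m r0 \<rho> n t"

lemma M_frozen: "frozen t \<Longrightarrow> n \<le> t \<Longrightarrow> Mv (Suc t) = Mv t"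
proof -
  assume f: "frozen t" and nt: "n \<le> t"
  have hP: "P (Suc t) = P t" and hR: "R (Suc t) = R t" using step_frozen[OF f] by auto
  have "Rg (Suc t) = Rg t" using range_Suc[of t] in_range[of _ t t] unfolding hP by auto
  moreover have "min (Suc t) n = min t n" using nt by simp
  ultimately show ?thesis unfolding M_val_def hP hR by simp
qed

lemma M_move:
  assumes nf: "\<not> frozen t"
  shows "Mv (Suc t) = Mv t + (\<Sum>y\<in>nbrs E (P t (Suc t mod n)). hh y) / real (deg E (P t (Suc t mod n)))
           - hh (P t (Suc t mod n)) + (real (min (Suc t) n) - real (min t n)) / real (deg E r0)"
proof -
  define i where "i = Suc t mod n"
  define x where "x = P t i"
  define e where "e = R t x"
  define y where "y = snd (m e)"
  have il: "i < n" unfolding i_def using i_less .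
  have e_in: "e \<in> out_edges E x" unfolding e_def using R_valid .
  have Exy: "E x y" unfolding y_def using out_E m_in e_in by blast
  have yx: "y \<noteq> x" using Exy irreflE by metis
  have hP: "P (Suc t) = (P t)(i := y)" and hR: "R (Suc t) = (R t)(x := m e)"
    using step_move[OF nf] unfolding i_def x_def e_def y_def by auto
  have A: "(\<Sum>j<n. hh (P (Suc t) j)) = (\<Sum>j<n. hh (P t j)) - hh x + hh y"
    unfolding hP x_def using sum_upd_gen[of "{..<n}" i "\<lambda>z v. hh v" "P t" y] il by simp
  have A': "(\<Sum>j<n. green E r0 (P s j) / real (deg E (P s j))) = (\<Sum>j<n. hh (P s j))" for s
    unfolding hh_def ..
  have rg: "Rg (Suc t) = insert y (Rg t)"
  proof -
    have "(P t)(i := y) ` {..<n} \<subseteq> insert y (Rg t)" using in_range[of _ t t] by auto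
    moreover have "y \<in> (P t)(i := y) ` {..<n}" using il by force
    ultimately show ?thesis using range_Suc[of t] unfolding hP by blast
  qed
  have xin: "x \<in> Rg t" unfolding x_def using in_range[OF il] by simp
  define \<phi> where "\<phi> = (\<lambda>z v. weight E r0 m v - weight E r0 m (\<rho> z))"
  have C1: "(\<Sum>z\<in>insert y (Rg t). \<phi> z (((R t)(x := m e)) z)) = (\<Sum>z\<in>Rg t. \<phi> z (((R t)(x := m e)) z))"
  proof (cases "y \<in> Rg t")
    case True then show ?thesis by (simp add: insert_absorb)
  next
    case False
    then have "\<phi> y (((R t)(x := m e)) y) = 0" using yx R_out unfolding \<phi>_def by simp
    then show ?thesis using False range_fin by simp
  qed
  have C2: "(\<Sum>z\<in>Rg t. \<phi> z (((R t)(x := m e)) z)) = (\<Sum>z\<in>Rg t. \<phi> z (R t z)) - \<phi> x e + \<phi> x (m e)"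
    using sum_upd_gen[OF range_fin xin, of \<phi> "R t" "m e"] unfolding e_def by simp
  have C3: "\<phi> x (m e) - \<phi> x e = (\<Sum>y\<in>nbrs E x. hh y) / real (deg E x) - hh y"
    unfolding \<phi>_def y_def using weight_step[OF e_in] by simp
  have "Mv (Suc t) = (\<Sum>j<n. hh (P (Suc t) j)) + real (min (Suc t) n) / real (deg E r0)
           + (\<Sum>z\<in>insert y (Rg t). \<phi> z (((R t)(x := m e)) z))"
    unfolding M_val_def A' rg hR \<phi>_def ..
  also have "\<dots> = (\<Sum>j<n. hh (P t j)) - hh x + hh y + real (min (Suc t) n) / real (deg E r0)
           + (\<Sum>z\<in>Rg t. \<phi> z (R t z)) + (\<Sum>y\<in>nbrs E x. hh y) / real (deg E x) - hh y"
    unfolding A C1 C2 using C3 by simp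
  also have "Mv t = (\<Sum>j<n. hh (P t j)) + real (min t n) / real (deg E r0) + (\<Sum>z\<in>Rg t. \<phi> z (R t z))"
    unfolding M_val_def A' \<phi>_def ..
  ultimately show ?thesis unfolding x_def i_def by (simp add: diff_divide_distrib)
qed

lemma M_const: "Mv t = real n * hh r0"
proof (induction t)
  case 0
  show ?case unfolding M_val_def P0 hh_def by simp
next
  case (Suc t)
  define i where "i = Suc t mod n"
  define x where "x = P t i"
  define S where "S = (\<Sum>y\<in>nbrs E x. hh y)"
  have mv: "\<not> frozen t \<Longrightarrow> Mv (Suc t) = Mv t + S / real (deg E x) - hh x
      + (real (min (Suc t) n) - real (min t n)) / real (deg E r0)"
    using M_move unfolding S_def x_def i_def by blast
  have dx: "real (deg E x) > 0" using deg_pos by simp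
  show ?case
  proof (cases "n \<le> t")
    case True
    have "\<exists>k<t. Suc k mod n = i" unfolding i_def sched_iff using True .
    from sched[OF this] obtain s where s: "s \<le> t" "P s i \<noteq> r0" by blast
    show ?thesis
    proof (cases "x = r0")
      case True
      then have "s \<noteq> t" using s x_def by auto
      then have "s < t" using s by simp
      then have "frozen t" unfolding frozen_def using s True unfolding x_def i_def by blast
      then have "Mv (Suc t) = Mv t" using M_frozen \<open>n \<le> t\<close> by blast
      then show ?thesis using Suc.IH by simp
    next
      case False
      then have nf: "\<not> frozen t" unfolding frozen_def x_def i_def by simp
      have "green E r0 x = S" unfolding S_def using green_eq[of x] False by simp
      then have hx: "hh x = S / real (deg E x)" unfolding hh_def by simp
      have "min (Suc t) n = min t n" using True by simp
      then have "Mv (Suc t) = Mv t" using mv[OF nf] hx by simp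
      then show ?thesis using Suc.IH by simp
    qed
  next
    case False
    have "\<not> (\<exists>k<t. Suc k mod n = i)" unfolding i_def sched_iff using False .
    then have nk: "\<forall>k<t. Suc k mod n \<noteq> i" by blast
    have all: "P s i = r0" if "s \<le> t" for s
    proof -
      have "\<forall>k<s. Suc k mod n \<noteq> i"
      proof (intro allI impI)
        fix k assume "k < s"
        then have "k < t" using that by simp
        then show "Suc k mod n \<noteq> i" using nk by blast
      qed
      then show ?thesis by (rule notmoved)
    qed
    have nf: "\<not> frozen t"
    proof
      assume "frozen t"
      then obtain s where "s < t" "P s i \<noteq> r0" unfolding frozen_def i_def by blast
      then show False using all[of s] by simp
    qed
    have xr: "x = r0" using all x_def by simp
    have d0: "real (deg E r0) > 0" using deg_pos by simp
    have "green E r0 x = 1 + S" unfolding S_def using green_eq[of x] xr by simp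
    then have hx: "hh r0 = (1 + S) / real (deg E r0)" unfolding hh_def xr by simp
    have mn: "real (min (Suc t) n) - real (min t n) = 1" using False by simp
    have "S / real (deg E x) - hh x + (real (min (Suc t) n) - real (min t n)) / real (deg E r0) = 0"
      unfolding mn xr hx using d0 by (simp add: field_simps)
    then have "Mv (Suc t) = Mv t" using mv[OF nf] by simp
    then show ?thesis using Suc.IH by simp
  qed
qed

end

theorem proposition2p1:
  fixes E :: "'v \<Rightarrow> 'v \<Rightarrow> bool" and r0 :: 'v
    and m :: "'v \<times> 'v \<Rightarrow> 'v \<times> 'v" and \<rho> :: "'v \<Rightarrow> 'v \<times> 'v" and n t :: nat
  assumes "simple_graph E" and "locally_finite E" and "connected_graph E"
    and "transient E r0"
    and "rotor_mechanism E m"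
    and "rotor_config E \<rho>"
    and "n \<ge> 1"
  shows "M_val E m r0 \<rho> n t = real n * green E r0 r0 / real (deg E r0)"
proof -
  interpret rsetup E r0 m \<rho> n using assms by unfold_locales
  show ?thesis using M_const[of t] unfolding hh_def by simp
qed

end
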